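(* Let $(\mathfrak{l},g_\rho^c)$ be as in the context, with $c\ge0$, $\rho>0$. With respect to the ordered basis $\mathcal{B}_n$: (1) If $n>1$, the mean curvature vector is $H=\frac{\mathrm{tr}(\mathrm{ad}(B_1^R))}{g_\rho^c(B_1^R,B_1^R)}B_1^R=(2n-2)\frac{\rho}{\rho+c}B_1^R$, and $$\mathrm{ad}(H)^s=(2n-2)\,\mathrm{diag}\Big(0,\tfrac{2\rho^2+4c\rho+c^2}{(\rho+c)(\rho+2c)},\tfrac{\rho}{\rho+c}\mathbb{1}_{2n-4},\mathcal{S}_4,\mathbb{O}_{2n-4},-\tfrac{c^2}{(\rho+c)(\rho+2c)}\Big)+(2n-2)\Big(-\tfrac{c}{2(\rho+c)(\rho+2c)}E_{2,4n-1}+\tfrac{2c(\rho+c)}{\rho+2c}E_{4n-1,2}\Big),$$ where $\mathcal{S}_4=\begin{pmatrix}0&0&-\frac{\rho}{\rho+2c}&0\\0&0&0&-\frac{\rho}{\rho+2c}\\-1&0&0&0\\0&-1&0&0\end{pmatrix}$. (2) If $n>1$, the symmetric endomorphism associated with the Killing form is $B=(2n+4)\frac{\rho}{\rho+c}E_{1,1}$. (3) If $n=1$, then $B=0=H$.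
   Context: Fix $n\ge1$, $\rho>0$, $c\ge0$. The real Lie algebra $\mathfrak{l}$ has basis $B_a^R,B_a^I$ ($a=1,\dots,n-1$; none if $n=1$), $e_k,f_k$ ($k=0,\dots,n-1$), $Z$, ordered as $\mathcal{B}_n=(e_0,f_0,Z)$ if $n=1$ and $\mathcal{B}_n=(B_1^R,B_1^I,\dots,B_{n-1}^R,B_{n-1}^I,e_0,f_0,e_1,f_1,\dots,e_{n-1},f_{n-1},Z)$ if $n>1$. Brackets (unlisted brackets of basis elements, up to antisymmetry, are zero): $[B_1^R,B_1^I]=2B_1^I$; for $a\in\{2,\dots,n-1\}$: $[B_1^R,B_a^R]=B_a^R$, $[B_1^R,B_a^I]=B_a^I$, $[B_a^R,B_a^I]=\tfrac12B_1^I$; $[e_0,f_0]=Z$, $[e_a,f_a]=-Z$ ($a\ge1$); $[B,Z]=0$. Mixed brackets after complex-bilinear extension, $E_k:=e_k-if_k$, $[B,\bar E_k]=\overline{[B,E_k]}$ for real $B$: for $a\ge2$, $[B_1^R,E_k]=-\delta_{k0}E_1-\delta_{k1}E_0$, $[B_a^R,E_k]=-\tfrac12(\delta_{k0}+\delta_{k1})E_a-\tfrac12\delta_{ka}(E_0-E_1)$, $[B_1^I,E_k]=-i(\delta_{k0}+\delta_{k1})(E_0-E_1)$, $[B_a^I,E_k]=\tfrac{i}{2}(\delta_{k0}+\delta_{k1})E_a-\tfrac{i}{2}\delta_{ka}(E_0-E_1)$. Inner product $g=g_\rho^c$: $g(B_1^R,B_1^R)=\frac{\rho+c}{\rho}$,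 $g(B_1^I,B_1^I)=\frac{(\rho+c)^3}{\rho^2(\rho+2c)}$, $g(B_a^R,B_a^R)=g(B_a^I,B_a^I)=\frac{\rho+c}{4\rho}$ ($a\ge2$), $g(e_0,e_0)=g(f_0,f_0)=\frac{\rho+2c}{4\rho^2}$, $g(e_a,e_a)=g(f_a,f_a)=\frac1{4\rho}$ ($a\ge1$), $g(Z,Z)=\frac{\rho+c}{4\rho^2(\rho+2c)}$, $g(B_1^I,Z)=-\frac{c(\rho+c)}{2\rho^2(\rho+2c)}$, other distinct basis pairs orthogonal. Let $\mathfrak{a}$ be the $g$-orthogonal complement of the nilradical of $\mathfrak{l}$ (for $n>1$, $\mathfrak{a}=\mathrm{span}\{B_1^R\}$; for $n=1$, $\mathfrak{a}=0$). The mean curvature vector $H\in\mathfrak{a}$ is defined by $g(H,A)=\mathrm{tr}(\mathrm{ad}A)$ for all $A\in\mathfrak{a}$; $\mathrm{ad}(H)^s=\frac12(\mathrm{ad}H+\mathrm{ad}H^* )$ with $^*$ the $g$-adjoint; $B$ is the $g$-symmetric endomorphism with $g(BX,Y)=\mathrm{tr}(\mathrm{ad}X\circ\mathrm{ad}Y)$. $E_{i,j}$ is the matrix unit; a matrix $M$ represents $T$ if $Tv_j=\sum_iM_{ij}v_i$. *)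

theory Defs
  imports Complex_Main
begin

text \<open>Vectors of l are coordinate functions nat => real with respect to the ordered
  basis B_n, indexed 1,...,4n-1 (coordinates outside this range are ignored by
  all operations below).  Matrices are functions nat => nat => real, only the
  entries with indices in 1,...,4n-1 being relevant.\<close>

datatype lb = BR nat | BI nat | Ee nat | Ff nat | Zz
  (* BR a = B_a^R, BI a = B_a^I, Ee k = e_k, Ff k = f_k, Zz = Z *)

definition labels :: "nat \<Rightarrow> lb set" where
  "labels n = {BR a | a. 1 \<le> a \<and> a \<le> n - 1} \<union> {BI a | a. 1 \<le> a \<and> a \<le> n - 1}
     \<union> {Ee k | k. k < n} \<union> {Ff k | k. k < n} \<union> {Zz}"

fun idx :: "nat \<Rightarrow> lb \<Rightarrow> nat" where
  "idx n (BR a) = 2 * a - 1"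
| "idx n (BI a) = 2 * a"
| "idx n (Ee k) = 2 * (n - 1) + 2 * k + 1"
| "idx n (Ff k) = 2 * (n - 1) + 2 * k + 2"
| "idx n Zz = 4 * n - 1"

definition dimL :: "nat \<Rightarrow> nat" where "dimL n = 4 * n - 1"

definition uvec :: "nat \<Rightarrow> nat \<Rightarrow> real" where
  "uvec i = (\<lambda>j. if j = i then 1 else 0)"

definition zvec :: "nat \<Rightarrow> real" where "zvec = (\<lambda>j. 0)"

definition sc :: "real \<Rightarrow> (nat \<Rightarrow> real) \<Rightarrow> nat \<Rightarrow> real" where
  "sc t v = (\<lambda>j. t * v j)"

definition kd :: "nat \<Rightarrow> nat \<Rightarrow> complex" where
  "kd x y = (if x = y then 1 else 0)"

text \<open>Coefficient of E_{k'} in [B, E_k], where E_k = e_k - i f_k (complex-bilinear extension).\<close>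
definition mixE :: "lb \<Rightarrow> nat \<Rightarrow> nat \<Rightarrow> complex" where
  "mixE B k k' = (case B of
      BR a \<Rightarrow> (if a = 1 then - (kd k 0 * kd k' 1 + kd k 1 * kd k' 0)
               else - (1/2) * (kd k 0 + kd k 1) * kd k' a - (1/2) * kd k a * (kd k' 0 - kd k' 1))
    | BI a \<Rightarrow> (if a = 1 then - \<i> * (kd k 0 + kd k 1) * (kd k' 0 - kd k' 1)
               else (\<i>/2) * (kd k 0 + kd k 1) * kd k' a - (\<i>/2) * kd k a * (kd k' 0 - kd k' 1))
    | _ \<Rightarrow> 0)"

text \<open>Real coordinates of [B, e_k] = Re [B,E_k] and [B, f_k] = - Im [B,E_k]:
  if [B,E_k] = sum_k' c_k' E_k', then [B,e_k] = sum (Re c) e_k' + (Im c) f_k'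
  and [B,f_k] = sum - (Im c) e_k' + (Re c) f_k'.\<close>
definition mix_e :: "nat \<Rightarrow> lb \<Rightarrow> nat \<Rightarrow> nat \<Rightarrow> real" where
  "mix_e n B k = (\<lambda>i. \<Sum>k'<n. Re (mixE B k k') * uvec (idx n (Ee k')) i
                              + Im (mixE B k k') * uvec (idx n (Ff k')) i)"

definition mix_f :: "nat \<Rightarrow> lb \<Rightarrow> nat \<Rightarrow> nat \<Rightarrow> real" where
  "mix_f n B k = (\<lambda>i. \<Sum>k'<n. - Im (mixE B k k') * uvec (idx n (Ee k')) i
                              + Re (mixE B k k') * uvec (idx n (Ff k')) i)"

text \<open>The listed brackets [x,y] of basis elements (one orientation only).\<close>
fun bb0 :: "nat \<Rightarrow> lb \<Rightarrow> lb \<Rightarrow> nat \<Rightarrow> real" where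
  "bb0 n (BR a) (BI b) =
     (if a = 1 \<and> b = 1 then sc 2 (uvec (idx n (BI 1)))
      else if a = 1 then uvec (idx n (BI b))
      else if a = b then sc (1/2) (uvec (idx n (BI 1)))
      else zvec)"
| "bb0 n (BR a) (BR b) = (if a = 1 \<and> 2 \<le> b then uvec (idx n (BR b)) else zvec)"
| "bb0 n (Ee a) (Ff b) =
     (if a = b then (if a = 0 then uvec (idx n Zz) else sc (-1) (uvec (idx n Zz))) else zvec)"
| "bb0 n (BR a) (Ee k) = mix_e n (BR a) k"
| "bb0 n (BR a) (Ff k) = mix_f n (BR a) k"
| "bb0 n (BI a) (Ee k) = mix_e n (BI a) k"
| "bb0 n (BI a) (Ff k) = mix_f n (BI a) k"
| "bb0 n _ _ = zvec"

definition bb :: "nat \<Rightarrow> lb \<Rightarrow> lb \<Rightarrow> nat \<Rightarrow> real" where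
  "bb n x y = (\<lambda>i. bb0 n x y i - bb0 n y x i)"

definition brk :: "nat \<Rightarrow> (nat \<Rightarrow> real) \<Rightarrow> (nat \<Rightarrow> real) \<Rightarrow> nat \<Rightarrow> real" where
  "brk n x y = (\<lambda>i. \<Sum>l\<in>labels n. \<Sum>m\<in>labels n. x (idx n l) * y (idx n m) * bb n l m i)"

definition admat :: "nat \<Rightarrow> (nat \<Rightarrow> real) \<Rightarrow> nat \<Rightarrow> nat \<Rightarrow> real" where
  "admat n x = (\<lambda>i j. brk n x (uvec j) i)"

definition mtr :: "nat \<Rightarrow> (nat \<Rightarrow> nat \<Rightarrow> real) \<Rightarrow> real" where
  "mtr n M = (\<Sum>i=1..dimL n. M i i)"

definition mmul :: "nat \<Rightarrow> (nat \<Rightarrow> nat \<Rightarrow> real) \<Rightarrow> (nat \<Rightarrow> nat \<Rightarrow> real) \<Rightarrow> nat \<Rightarrow> nat \<Rightarrow> real" where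
  "mmul n M N = (\<lambda>i j. \<Sum>k=1..dimL n. M i k * N k j)"

definition matvec :: "nat \<Rightarrow> (nat \<Rightarrow> nat \<Rightarrow> real) \<Rightarrow> (nat \<Rightarrow> real) \<Rightarrow> nat \<Rightarrow> real" where
  "matvec n M x = (\<lambda>i. \<Sum>j=1..dimL n. M i j * x j)"

definition Emat :: "nat \<Rightarrow> nat \<Rightarrow> nat \<Rightarrow> nat \<Rightarrow> real" where
  "Emat a b = (\<lambda>i j. if i = a \<and> j = b then 1 else 0)"

definition gl :: "real \<Rightarrow> real \<Rightarrow> lb \<Rightarrow> lb \<Rightarrow> real" where
  "gl \<rho> c l m =
    (if l = m then
       (case l of
          BR a \<Rightarrow> (if a = 1 then (\<rho> + c) / \<rho> else (\<rho> + c) / (4 * \<rho>))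
        | BI a \<Rightarrow> (if a = 1 then (\<rho> + c) ^ 3 / (\<rho>^2 * (\<rho> + 2 * c)) else (\<rho> + c) / (4 * \<rho>))
        | Ee k \<Rightarrow> (if k = 0 then (\<rho> + 2 * c) / (4 * \<rho>^2) else 1 / (4 * \<rho>))
        | Ff k \<Rightarrow> (if k = 0 then (\<rho> + 2 * c) / (4 * \<rho>^2) else 1 / (4 * \<rho>))
        | Zz \<Rightarrow> (\<rho> + c) / (4 * \<rho>^2 * (\<rho> + 2 * c)))
     else if (l = BI 1 \<and> m = Zz) \<or> (l = Zz \<and> m = BI 1)
       then - (c * (\<rho> + c)) / (2 * \<rho>^2 * (\<rho> + 2 * c))
     else 0)"

definition gip :: "nat \<Rightarrow> real \<Rightarrow> real \<Rightarrow> (nat \<Rightarrow> real) \<Rightarrow> (nat \<Rightarrow> real) \<Rightarrow> real" where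
  "gip n \<rho> c x y = (\<Sum>l\<in>labels n. \<Sum>m\<in>labels n. x (idx n l) * y (idx n m) * gl \<rho> c l m)"

text \<open>The subspace a (g-orthogonal complement of the nilradical), as given in the context:
  span{B_1^R} if n > 1 and 0 if n = 1.\<close>
definition aset :: "nat \<Rightarrow> (nat \<Rightarrow> real) set" where
  "aset n = (if 1 < n then {sc t (uvec (idx n (BR 1))) | t. True} else {zvec})"

definition is_meancurv :: "nat \<Rightarrow> real \<Rightarrow> real \<Rightarrow> (nat \<Rightarrow> real) \<Rightarrow> bool" where
  "is_meancurv n \<rho> c H \<longleftrightarrow> H \<in> aset n \<and> (\<forall>A\<in>aset n. gip n \<rho> c H A = mtr n (admat n A))"

definition S4 :: "real \<Rightarrow> real \<Rightarrow> nat \<Rightarrow> nat \<Rightarrow> real" where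
  "S4 \<rho> c i j =
     (if (i, j) = (1, 3) \<or> (i, j) = (2, 4) then - \<rho> / (\<rho> + 2 * c)
      else if (i, j) = (3, 1) \<or> (i, j) = (4, 2) then -1
      else 0)"

text \<open>The block-diagonal matrix
  diag(0, (2rho^2+4c rho+c^2)/((rho+c)(rho+2c)), rho/(rho+c) 1_{2n-4}, S_4, O_{2n-4}, -c^2/((rho+c)(rho+2c))).\<close>
definition blockdiag :: "nat \<Rightarrow> real \<Rightarrow> real \<Rightarrow> nat \<Rightarrow> nat \<Rightarrow> real" where
  "blockdiag n \<rho> c i j =
     (if 2 * n - 1 \<le> i \<and> i \<le> 2 * n + 2 \<and> 2 * n - 1 \<le> j \<and> j \<le> 2 * n + 2
        then S4 \<rho> c (i - (2 * n - 2)) (j - (2 * n - 2))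
      else if i \<noteq> j then 0
      else if i = 2 then (2 * \<rho>^2 + 4 * c * \<rho> + c^2) / ((\<rho> + c) * (\<rho> + 2 * c))
      else if 3 \<le> i \<and> i \<le> 2 * n - 2 then \<rho> / (\<rho> + c)
      else if i = 4 * n - 1 then - (c^2) / ((\<rho> + c) * (\<rho> + 2 * c))
      else 0)"

definition adHs_claim :: "nat \<Rightarrow> real \<Rightarrow> real \<Rightarrow> nat \<Rightarrow> nat \<Rightarrow> real" where
  "adHs_claim n \<rho> c = (\<lambda>i j.
     (2 * real n - 2) * blockdiag n \<rho> c i j
     + (2 * real n - 2) * (- c / (2 * (\<rho> + c) * (\<rho> + 2 * c)) * Emat 2 (4 * n - 1) i j
                           + 2 * c * (\<rho> + c) / (\<rho> + 2 * c) * Emat (4 * n - 1) 2 i j))"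

end

theory Submission
  imports Defs
begin


lemma mem_labels[simp]:
  "BR a \<in> labels n \<longleftrightarrow> 1 \<le> a \<and> a < n"
  "BI a \<in> labels n \<longleftrightarrow> 1 \<le> a \<and> a < n"
  "Ee k \<in> labels n \<longleftrightarrow> k < n"
  "Ff k \<in> labels n \<longleftrightarrow> k < n"
  "Zz \<in> labels n"
  by (auto simp: labels_def)

lemma finite_labels[simp]: "finite (labels n)"
proof -
  have "labels n \<subseteq> BR ` {..n} \<union> BI ` {..n} \<union> Ee ` {..n} \<union> Ff ` {..n} \<union> {Zz}"
    by (auto simp: labels_def)
  thus ?thesis by (rule finite_subset) auto
qed

lemma idx_inj:
  assumes "l \<in> labels n" "m \<in> labels n" "idx n l = idx n m" shows "l = m"
  using assms apply (cases l; cases m) apply auto by presburger+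

lemma idx_eq_iff[simp]:
  "l \<in> labels n \<Longrightarrow> m \<in> labels n \<Longrightarrow> idx n l = idx n m \<longleftrightarrow> l = m"
  using idx_inj by blast

lemma idx_range: "1 \<le> n \<Longrightarrow> l \<in> labels n \<Longrightarrow> idx n l \<in> {1..dimL n}"
  by (cases l) (auto simp: dimL_def)

lemma idx_surj:
  assumes "i \<in> {1..dimL n}" shows "\<exists>l\<in>labels n. idx n l = i"
proof -
  from assms have i1: "1 \<le> i" "i \<le> 4*n-1" by (auto simp: dimL_def)
  show ?thesis
  proof (cases "i \<le> 2*n-2")
    case True
    show ?thesis
    proof (cases "even i")
      case True
      then obtain a where "i = 2*a" by blast
      with \<open>i \<le> 2*n-2\<close> i1 show ?thesis by (intro bexI[of _ "BI a"]) auto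
    next
      case False
      then obtain a where "i = 2*a+1" using oddE by blast
      with \<open>i \<le> 2*n-2\<close> i1 show ?thesis by (intro bexI[of _ "BR (a+1)"]) auto
    qed
  next
    case F: False
    show ?thesis
    proof (cases "i = 4*n-1")
      case True thus ?thesis by (intro bexI[of _ Zz]) auto
    next
      case False
      define j where "j = i - (2*n-2)"
      have j: "1 \<le> j" "j \<le> 2*n" "i = 2*(n-1) + j" using F False i1 by (auto simp: j_def)
      show ?thesis
      proof (cases "even j")
        case True
        then obtain m where m: "j = 2*m" by blast
        with j have "j = 2*(m-1)+2" by simp
        then obtain k where "j = 2*k+2" by blast
        with j show ?thesis by (intro bexI[of _ "Ff k"]) auto
      next
        case False
        then obtain k where "j = 2*k+1" using oddE by blast
        with j show ?thesis by (intro bexI[of _ "Ee k"]) auto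
      qed
    qed
  qed
qed

lemma idx_bij: assumes "1 \<le> n" shows "bij_betw (idx n) (labels n) {1..dimL n}"
  unfolding bij_betw_def
proof
  show "inj_on (idx n) (labels n)" using idx_inj by (auto simp: inj_on_def)
  show "idx n ` labels n = {1..dimL n}"
  proof
    show "idx n ` labels n \<subseteq> {1..dimL n}" using idx_range assms by blast
    show "{1..dimL n} \<subseteq> idx n ` labels n" using idx_surj by (metis image_eqI subsetI)
  qed
qed

lemma sum_idx: "1 \<le> n \<Longrightarrow> (\<Sum>i=1..dimL n. f i) = (\<Sum>l\<in>labels n. f (idx n l))"
  using sum.reindex_bij_betw[OF idx_bij, of n f] by simp



lemma labels_eq: "labels n = BR ` {1..n-1} \<union> BI ` {1..n-1} \<union> Ee ` {..<n} \<union> Ff ` {..<n} \<union> {Zz}"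
  by (auto simp: labels_def)

lemma sum_labels: "(\<Sum>l\<in>labels n. f l) = (\<Sum>a=1..n-1. f (BR a)) + (\<Sum>a=1..n-1. f (BI a))
   + (\<Sum>k<n. f (Ee k)) + (\<Sum>k<n. f (Ff k)) + f Zz"
proof -
  have d1: "(BR ` {1..n-1} \<union> BI ` {1..n-1} \<union> Ee ` {..<n} \<union> Ff ` {..<n}) \<inter> {Zz} = {}" by auto
  have d2: "(BR ` {1..n-1} \<union> BI ` {1..n-1} \<union> Ee ` {..<n}) \<inter> Ff ` {..<n} = {}" by auto
  have d3: "(BR ` {1..n-1} \<union> BI ` {1..n-1}) \<inter> Ee ` {..<n} = {}" by auto
  have d4: "(BR ` {1..n-1}) \<inter> BI ` {1..n-1} = {}" by auto
  show ?thesis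
    unfolding labels_eq
    apply (subst sum.union_disjoint[OF _ _ d1], simp, simp)
    apply (subst sum.union_disjoint[OF _ _ d2], simp, simp)
    apply (subst sum.union_disjoint[OF _ _ d3], simp, simp)
    apply (subst sum.union_disjoint[OF _ _ d4], simp, simp)
    apply (simp add: sum.reindex inj_on_def)
    done
qed

lemma sum_labels2:
  assumes "2 \<le> n"
  shows "(\<Sum>l\<in>labels n. f l) = f (BR 1) + f (BI 1) + f (Ee 0) + f (Ff 0) + f (Ee 1) + f (Ff 1) + f Zz
    + (\<Sum>a\<in>{2..<n}. f (BR a) + f (BI a) + f (Ee a) + f (Ff a))"
proof -
  have e1: "{1..n-1} = insert 1 {2..<n}" using assms by auto
  have e2: "{..<n} = insert 0 (insert 1 {2..<n})" using assms by auto
  show ?thesis unfolding sum_labels e1 e2 by (simp add: sum.distrib add_ac)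
qed

lemma labels1: "labels 1 = {Ee 0, Ff 0, Zz}"
  by (auto simp: labels_def)



definition cands :: "lb \<Rightarrow> nat list" where
  "cands B = (case B of BR a \<Rightarrow> if a = 1 then [0,1] else [0,1,a]
                      | BI a \<Rightarrow> if a = 1 then [0,1] else [0,1,a] | _ \<Rightarrow> [])"

definition mixl_e :: "lb \<Rightarrow> nat \<Rightarrow> (lb \<times> real) list" where
  "mixl_e B k = concat (map (\<lambda>k'. [(Ee k', Re (mixE B k k')), (Ff k', Im (mixE B k k'))]) (cands B))"

definition mixl_f :: "lb \<Rightarrow> nat \<Rightarrow> (lb \<times> real) list" where
  "mixl_f B k = concat (map (\<lambda>k'. [(Ee k', - Im (mixE B k k')), (Ff k', Re (mixE B k k'))]) (cands B))"

definition vec :: "nat \<Rightarrow> (lb \<times> real) list \<Rightarrow> nat \<Rightarrow> real" where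
  "vec n xs = (\<lambda>i. \<Sum>(t,c)\<leftarrow>xs. c * uvec (idx n t) i)"

lemma vec_Nil[simp]: "vec n [] = zvec" by (simp add: vec_def zvec_def)
lemma vec_Cons: "vec n (x # xs) = (\<lambda>i. snd x * uvec (idx n (fst x)) i + vec n xs i)"
  by (cases x) (simp add: vec_def)
lemma vec_append: "vec n (xs @ ys) = (\<lambda>i. vec n xs i + vec n ys i)"
  by (simp add: vec_def)

lemma mixE_zero:
  assumes "B = BR a \<or> B = BI a" "k' \<notin> set (cands B)"
  shows "mixE B k k' = 0"
  using assms by (auto simp: mixE_def kd_def cands_def split: if_splits)

lemma sum_list_concat_map2:
  "(\<Sum>(t,c)\<leftarrow>concat (map (\<lambda>k. [(u k, v k), (w k, z k)]) xs). (h t c :: real))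
   = (\<Sum>k\<leftarrow>xs. h (u k) (v k) + h (w k) (z k))"
  by (induction xs) auto

lemma cands_distinct: "B \<in> labels n \<Longrightarrow> distinct (cands B)"
  by (cases B) (auto simp: cands_def)

lemma cands_range: "B = BR a \<or> B = BI a \<Longrightarrow> B \<in> labels n \<Longrightarrow> set (cands B) \<subseteq> {..<n}"
  by (auto simp: cands_def split: if_splits)

lemma mix_sum_reduce:
  assumes "B = BR a \<or> B = BI a" "B \<in> labels n"
    and "\<And>k'. k' \<notin> set (cands B) \<Longrightarrow> g k' = (0::real)"
  shows "(\<Sum>k'<n. g k') = (\<Sum>k'\<leftarrow>cands B. g k')"
proof -
  have "(\<Sum>k'\<leftarrow>cands B. g k') = sum g (set (cands B))"
    by (simp add: sum_list_distinct_conv_sum_set cands_distinct[OF assms(2)])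
  also have "\<dots> = (\<Sum>k'<n. g k')"
    by (rule sum.mono_neutral_left) (use cands_range[OF assms(1,2)] assms(3) in auto)
  finally show ?thesis by simp
qed

lemma mix_e_vec:
  assumes "B = BR a \<or> B = BI a" "B \<in> labels n"
  shows "mix_e n B k = vec n (mixl_e B k)"
proof
  fix i
  have "mix_e n B k i = (\<Sum>k'\<leftarrow>cands B. Re (mixE B k k') * uvec (idx n (Ee k')) i
                              + Im (mixE B k k') * uvec (idx n (Ff k')) i)"
    unfolding mix_e_def by (rule mix_sum_reduce[OF assms]) (simp add: mixE_zero[OF assms(1)])
  also have "\<dots> = vec n (mixl_e B k) i"
    unfolding vec_def mixl_e_def by (subst sum_list_concat_map2) simp
  finally show "mix_e n B k i = vec n (mixl_e B k) i" .
qed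

lemma mix_f_vec:
  assumes "B = BR a \<or> B = BI a" "B \<in> labels n"
  shows "mix_f n B k = vec n (mixl_f B k)"
proof
  fix i
  have "mix_f n B k i = (\<Sum>k'\<leftarrow>cands B. - Im (mixE B k k') * uvec (idx n (Ee k')) i
                              + Re (mixE B k k') * uvec (idx n (Ff k')) i)"
    unfolding mix_f_def by (rule mix_sum_reduce[OF assms]) (simp add: mixE_zero[OF assms(1)])
  also have "\<dots> = vec n (mixl_f B k) i"
    unfolding vec_def mixl_f_def by (subst sum_list_concat_map2) simp
  finally show "mix_f n B k i = vec n (mixl_f B k) i" .
qed

fun imgB0 :: "lb \<Rightarrow> lb \<Rightarrow> (lb \<times> real) list" where
  "imgB0 (BR a) (BI b) =
     (if a = 1 \<and> b = 1 then [(BI 1, 2)]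
      else if a = 1 then [(BI b, 1)]
      else if a = b then [(BI 1, 1/2)]
      else [])"
| "imgB0 (BR a) (BR b) = (if a = 1 \<and> 2 \<le> b then [(BR b, 1)] else [])"
| "imgB0 (Ee a) (Ff b) =
     (if a = b then (if a = 0 then [(Zz, 1)] else [(Zz, -1)]) else [])"
| "imgB0 (BR a) (Ee k) = mixl_e (BR a) k"
| "imgB0 (BR a) (Ff k) = mixl_f (BR a) k"
| "imgB0 (BI a) (Ee k) = mixl_e (BI a) k"
| "imgB0 (BI a) (Ff k) = mixl_f (BI a) k"
| "imgB0 _ _ = []"

lemma bb0_vec:
  assumes "l \<in> labels n" "q \<in> labels n"
  shows "bb0 n l q = vec n (imgB0 l q)"
  using assms
  apply (cases l; cases q)
  apply (simp_all add: mix_e_vec mix_f_vec)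
  apply (auto simp: vec_Cons sc_def zvec_def)
  done

definition negl :: "(lb \<times> real) list \<Rightarrow> (lb \<times> real) list" where
  "negl xs = map (\<lambda>(t,c). (t, - c)) xs"

definition img :: "lb \<Rightarrow> lb \<Rightarrow> (lb \<times> real) list" where
  "img l q = imgB0 l q @ negl (imgB0 q l)"

lemma vec_negl: "vec n (negl xs) = (\<lambda>i. - vec n xs i)"
  unfolding vec_def negl_def by (induction xs) (auto simp: fun_eq_iff)

lemma bb_vec:
  assumes "l \<in> labels n" "q \<in> labels n"
  shows "bb n l q = vec n (img l q)"
  unfolding bb_def img_def vec_append vec_negl bb0_vec[OF assms] bb0_vec[OF assms(2,1)]
  by simp

definition evl :: "(lb \<times> real) list \<Rightarrow> lb \<Rightarrow> real" where
  "evl xs p = (\<Sum>(t,c)\<leftarrow>xs. if t = p then c else 0)"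

lemma evl_simps[simp]: "evl [] p = 0" "evl ((t,c) # xs) p = (if t = p then c else 0) + evl xs p"
  "evl (xs @ ys) p = evl xs p + evl ys p"
  by (auto simp: evl_def)

lemma vec_idx:
  assumes "\<forall>t\<in>fst ` set xs. t \<in> labels n" "p \<in> labels n"
  shows "vec n xs (idx n p) = evl xs p"
  using assms by (induction xs) (auto simp: vec_Cons uvec_def zvec_def)

lemma img_targets:
  assumes "l \<in> labels n" "q \<in> labels n"
  shows "\<forall>t\<in>fst ` set (img l q). t \<in> labels n"
  using assms
  apply (cases l; cases q)
  apply (auto simp: img_def negl_def mixl_e_def mixl_f_def cands_def split: if_splits)
  done

definition C :: "lb \<Rightarrow> lb \<Rightarrow> lb \<Rightarrow> real" where
  "C l q p = evl (img l q) p"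

lemma bb_idx:
  assumes "l \<in> labels n" "q \<in> labels n" "p \<in> labels n"
  shows "bb n l q (idx n p) = C l q p"
  unfolding C_def bb_vec[OF assms(1,2)] using vec_idx[OF img_targets[OF assms(1,2)] assms(3)] .

lemma sum_evl:
  "(\<Sum>p\<in>labels n. evl xs p * F p) = (\<Sum>(t,c)\<leftarrow>xs. c * (if t \<in> labels n then F t else 0))"
proof (induction xs)
  case Nil thus ?case by simp
next
  case (Cons x xs)
  obtain t c where x: "x = (t,c)" by (cases x)
  have eq: "\<And>p. evl (x#xs) p * F p = (if t = p then c * F p else 0) + evl xs p * F p"
    by (simp add: x distrib_right)
  have "(\<Sum>p\<in>labels n. evl (x#xs) p * F p) = (\<Sum>p\<in>labels n. (if t = p then c * F p else 0))
      + (\<Sum>p\<in>labels n. evl xs p * F p)"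
    by (simp only: eq sum.distrib)
  also have "(\<Sum>p\<in>labels n. (if t = p then c * F p else 0)) = c * (if t \<in> labels n then F t else 0)"
    by (simp add: sum.delta)
  finally show ?case using Cons by (simp add: x)
qed



lemma uvec_idx: "l \<in> labels n \<Longrightarrow> m \<in> labels n \<Longrightarrow> uvec (idx n l) (idx n m) = (if m = l then 1 else 0)"
  by (auto simp: uvec_def)

lemma admat_col:
  assumes "q \<in> labels n"
  shows "admat n x i (idx n q) = (\<Sum>l\<in>labels n. x (idx n l) * bb n l q i)"
proof -
  have "admat n x i (idx n q) = (\<Sum>l\<in>labels n. \<Sum>m\<in>labels n. x (idx n l) * uvec (idx n q) (idx n m) * bb n l m i)"
    by (simp add: admat_def brk_def)
  also have "\<dots> = (\<Sum>l\<in>labels n. x (idx n l) * bb n l q i)"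
  proof (rule sum.cong[OF refl])
    fix l assume "l \<in> labels n"
    have "(\<Sum>m\<in>labels n. x (idx n l) * uvec (idx n q) (idx n m) * bb n l m i)
       = (\<Sum>m\<in>labels n. if m = q then x (idx n l) * bb n l m i else 0)"
      by (rule sum.cong[OF refl]) (simp add: uvec_idx[OF assms])
    also have "\<dots> = x (idx n l) * bb n l q i" using assms by (simp add: sum.delta')
    finally show "(\<Sum>m\<in>labels n. x (idx n l) * uvec (idx n q) (idx n m) * bb n l m i) = x (idx n l) * bb n l q i" .
  qed
  finally show ?thesis .
qed

lemma admat_idx:
  assumes "p \<in> labels n" "q \<in> labels n"
  shows "admat n x (idx n p) (idx n q) = (\<Sum>l\<in>labels n. x (idx n l) * C l q p)"
  unfolding admat_col[OF assms(2)]
  by (rule sum.cong[OF refl]) (simp add: bb_idx assms)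

lemma sum_single:
  assumes "l0 \<in> labels n"
  shows "(\<Sum>l\<in>labels n. uvec (idx n l0) (idx n l) * f l) = f l0"
proof -
  have "(\<Sum>l\<in>labels n. uvec (idx n l0) (idx n l) * f l) = (\<Sum>l\<in>labels n. if l = l0 then f l else 0)"
    by (rule sum.cong[OF refl]) (simp add: uvec_idx assms)
  thus ?thesis using assms by (simp add: sum.delta')
qed

lemma sum_list_if: "sum_list (map f (if P then xs else ys)) = (if P then sum_list (map f xs) else sum_list (map f ys))"
  by simp

lemma evl_if: "evl (if P then xs else ys) p = (if P then evl xs p else evl ys p)" by simp
lemma map_if: "map f (if P then xs else ys) = (if P then map f xs else map f ys)" by simp

lemma sum_list_if2: "sum_list (if P then xs else ys) = (if P then sum_list xs else sum_list ys)" by simp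

lemmas Csimps = sum_list_if evl_if map_if sum_list_if2 C_def img_def negl_def mixl_e_def mixl_f_def cands_def mixE_def kd_def

lemma trace_BR1:
  assumes "2 \<le> n"
  shows "mtr n (admat n (uvec (idx n (BR 1)))) = 2 * real n - 2"
proof -
  have n1: "1 \<le> n" using assms by simp
  have "mtr n (admat n (uvec (idx n (BR 1)))) = (\<Sum>p\<in>labels n. C (BR 1) p p)"
    unfolding mtr_def sum_idx[OF n1]
    by (rule sum.cong[OF refl]) (use assms sum_single[of "BR 1" n] in \<open>simp add: admat_idx\<close>)
  also have "\<dots> = 2 * real n - 2"
    unfolding sum_labels2[OF assms]
    using assms by (simp add: Csimps of_nat_diff)
  finally show ?thesis .
qed

lemma label_cases2:
  assumes "2 \<le> n" "l \<in> labels n"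
  shows "l = BR 1 \<or> l = BI 1 \<or> l = Ee 0 \<or> l = Ff 0 \<or> l = Ee 1 \<or> l = Ff 1 \<or> l = Zz \<or>
    (\<exists>a. 2 \<le> a \<and> a < n \<and> (l = BR a \<or> l = BI a \<or> l = Ee a \<or> l = Ff a))"
proof (cases l)
  case (BR a) thus ?thesis using assms by (cases "a = 1") auto
next
  case (BI a) thus ?thesis using assms by (cases "a = 1") auto
next
  case (Ee a) thus ?thesis using assms by (cases "a = 0"; cases "a = 1") auto
next
  case (Ff a) thus ?thesis using assms by (cases "a = 0"; cases "a = 1") auto
qed auto

definition KK :: "nat \<Rightarrow> lb \<Rightarrow> lb \<Rightarrow> real" where
  "KK n l m = (\<Sum>q\<in>labels n. \<Sum>(t,c)\<leftarrow>img l q. c * (if t \<in> labels n then C m t q else 0))"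

lemma KK_test:
  assumes "2 \<le> n" "2 \<le> a" "a < n" "2 \<le> b" "b < n"
  shows "KK n (BR a) (BR b) = 0" "KK n (BR a) (BI b) = 0" "KK n (BR 1) (BR 1) = 2 * real n + 4"
  unfolding KK_def sum_labels2[OF assms(1)]
  using assms apply (simp_all add: Csimps cong: if_cong)
  done



lemma KK_val:
  assumes "2 \<le> n" "l \<in> labels n" "m \<in> labels n"
  shows "KK n l m = (if l = BR 1 \<and> m = BR 1 then 2 * real n + 4 else 0)"
proof -
  have n: "0 < n" "Suc 0 < n" using assms by auto
  show ?thesis
  using label_cases2[OF assms(1,2)] label_cases2[OF assms(1,3)]
  apply (elim disjE exE conjE)
  apply (simp_all add: KK_def sum_labels2[OF assms(1)] Csimps of_nat_diff assms(1) n cong: if_cong)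
  done
qed



lemma sum4_swap:
  "(\<Sum>p\<in>A. \<Sum>q\<in>A. \<Sum>l\<in>A. \<Sum>m\<in>A. G p q l m) = (\<Sum>l\<in>A. \<Sum>m\<in>A. \<Sum>q\<in>A. \<Sum>p\<in>A. (G p q l m :: real))"
proof -
  have "(\<Sum>p\<in>A. \<Sum>q\<in>A. \<Sum>l\<in>A. \<Sum>m\<in>A. G p q l m) = (\<Sum>p\<in>A. \<Sum>l\<in>A. \<Sum>q\<in>A. \<Sum>m\<in>A. G p q l m)"
    by (rule sum.cong[OF refl], rule sum.swap)
  also have "\<dots> = (\<Sum>l\<in>A. \<Sum>p\<in>A. \<Sum>q\<in>A. \<Sum>m\<in>A. G p q l m)" by (rule sum.swap)
  also have "\<dots> = (\<Sum>l\<in>A. \<Sum>p\<in>A. \<Sum>m\<in>A. \<Sum>q\<in>A. G p q l m)"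
    by (rule sum.cong[OF refl], rule sum.cong[OF refl], rule sum.swap)
  also have "\<dots> = (\<Sum>l\<in>A. \<Sum>m\<in>A. \<Sum>p\<in>A. \<Sum>q\<in>A. G p q l m)"
    by (rule sum.cong[OF refl], rule sum.swap)
  also have "\<dots> = (\<Sum>l\<in>A. \<Sum>m\<in>A. \<Sum>q\<in>A. \<Sum>p\<in>A. G p q l m)"
    by (rule sum.cong[OF refl], rule sum.cong[OF refl], rule sum.swap)
  finally show ?thesis .
qed

lemma sum2_delta:
  assumes "a \<in> A" "finite A"
  shows "(\<Sum>l\<in>A. \<Sum>m\<in>A. if l = a \<and> m = a then f l m else 0) = (f a a :: real)"
proof -
  have "\<And>l. (\<Sum>m\<in>A. if l = a \<and> m = a then f l m else 0) = (if l = a then f l a else 0)"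
    using assms by (auto simp: sum.delta')
  thus ?thesis using assms by (simp add: sum.delta')
qed

lemma KK_alt:
  "KK n l m = (\<Sum>q\<in>labels n. \<Sum>p\<in>labels n. C l q p * C m p q)"
  unfolding KK_def C_def[of l] sum_evl ..

lemma killing_expand:
  assumes "1 \<le> n"
  shows "mtr n (mmul n (admat n x) (admat n y))
     = (\<Sum>l\<in>labels n. \<Sum>m\<in>labels n. x (idx n l) * y (idx n m) * KK n l m)"
proof -
  have "mtr n (mmul n (admat n x) (admat n y))
      = (\<Sum>p\<in>labels n. \<Sum>q\<in>labels n. admat n x (idx n p) (idx n q) * admat n y (idx n q) (idx n p))"
    unfolding mtr_def mmul_def sum_idx[OF assms] ..
  also have "\<dots> = (\<Sum>p\<in>labels n. \<Sum>q\<in>labels n.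
       (\<Sum>l\<in>labels n. x (idx n l) * C l q p) * (\<Sum>m\<in>labels n. y (idx n m) * C m p q))"
    by (simp add: admat_idx)
  also have "\<dots> = (\<Sum>p\<in>labels n. \<Sum>q\<in>labels n. \<Sum>l\<in>labels n. \<Sum>m\<in>labels n.
        x (idx n l) * y (idx n m) * (C l q p * C m p q))"
    by (simp only: sum_product) (simp add: mult_ac)
  also have "\<dots> = (\<Sum>l\<in>labels n. \<Sum>m\<in>labels n. \<Sum>q\<in>labels n. \<Sum>p\<in>labels n.
        x (idx n l) * y (idx n m) * (C l q p * C m p q))"
    by (rule sum4_swap)
  also have "\<dots> = (\<Sum>l\<in>labels n. \<Sum>m\<in>labels n. x (idx n l) * y (idx n m) * KK n l m)"
    by (simp add: KK_alt sum_distrib_left)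
  finally show ?thesis .
qed

lemma killing_ge2:
  assumes "2 \<le> n"
  shows "mtr n (mmul n (admat n x) (admat n y)) = (2 * real n + 4) * x (idx n (BR 1)) * y (idx n (BR 1))"
proof -
  have n1: "1 \<le> n" using assms by simp
  have b: "BR 1 \<in> labels n" using assms by simp
  have "mtr n (mmul n (admat n x) (admat n y))
     = (\<Sum>l\<in>labels n. \<Sum>m\<in>labels n. if l = BR 1 \<and> m = BR 1 then x (idx n l) * y (idx n m) * (2 * real n + 4) else 0)"
    unfolding killing_expand[OF n1]
    by (rule sum.cong[OF refl], rule sum.cong[OF refl]) (simp add: KK_val[OF assms])
  also have "\<dots> = (2 * real n + 4) * x (idx n (BR 1)) * y (idx n (BR 1))"
    by (subst sum2_delta[OF b finite_labels]) simp
  finally show ?thesis .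
qed

lemma KK_1: "l \<in> labels 1 \<Longrightarrow> m \<in> labels 1 \<Longrightarrow> KK 1 l m = 0"
proof -
  have L: "labels (Suc 0) = {Ee 0, Ff 0, Zz}" using labels1 by simp
  show "l \<in> labels 1 \<Longrightarrow> m \<in> labels 1 \<Longrightarrow> KK 1 l m = 0"
    unfolding labels1 by (auto simp: KK_def L Csimps)
qed

lemma killing_1:
  "mtr 1 (mmul 1 (admat 1 x) (admat 1 y)) = 0"
proof -
  have "\<And>l m. l \<in> labels 1 \<Longrightarrow> m \<in> labels 1 \<Longrightarrow> x (idx 1 l) * y (idx 1 m) * KK 1 l m = 0"
    using KK_1 by simp
  hence "(\<Sum>l\<in>labels 1. \<Sum>m\<in>labels 1. x (idx 1 l) * y (idx 1 m) * KK 1 l m) = 0"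
    by (intro sum.neutral ballI) blast
  thus ?thesis unfolding killing_expand[OF order_refl] .
qed

lemma gl_BR1: "gl \<rho> c (BR 1) m = (if m = BR 1 then (\<rho> + c) / \<rho> else 0)"
  "gl \<rho> c (BR (Suc 0)) m = (if m = BR (Suc 0) then (\<rho> + c) / \<rho> else 0)"
  by (auto simp: gl_def)

lemma killing_rhs:
  assumes "2 \<le> n"
  shows "gip n \<rho> c (matvec n (\<lambda>i j. K * Emat 1 1 i j) x) y = K * x 1 * y 1 * ((\<rho> + c) / \<rho>)"
proof -
  have b: "BR 1 \<in> labels n" using assms by simp
  have one: "1 \<in> {1..dimL n}" using assms by (simp add: dimL_def)
  have mv: "matvec n (\<lambda>i j. K * Emat 1 1 i j) x = (\<lambda>i. if i = 1 then K * x 1 else 0)"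
  proof
    fix i
    have "(\<Sum>j=1..dimL n. K * Emat 1 1 i j * x j) = (\<Sum>j=1..dimL n. if j = 1 then (if i = 1 then K * x j else 0) else 0)"
      by (rule sum.cong[OF refl]) (simp add: Emat_def)
    also have "\<dots> = (if i = 1 then K * x 1 else 0)" using one by (simp add: sum.delta')
    finally show "matvec n (\<lambda>i j. K * Emat 1 1 i j) x i = (if i = 1 then K * x 1 else 0)"
      by (simp add: matvec_def)
  qed
  have i1: "\<And>l. l \<in> labels n \<Longrightarrow> (idx n l = 1) = (l = BR 1)"
    "\<And>l. l \<in> labels n \<Longrightarrow> (idx n l = Suc 0) = (l = BR (Suc 0))"
    using idx_eq_iff[OF _ b] by simp_all
  have "gip n \<rho> c (matvec n (\<lambda>i j. K * Emat 1 1 i j) x) y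
     = (\<Sum>l\<in>labels n. \<Sum>m\<in>labels n. if l = BR 1 \<and> m = BR 1 then K * x 1 * y (idx n m) * ((\<rho> + c) / \<rho>) else 0)"
    unfolding gip_def mv
    by (rule sum.cong[OF refl], rule sum.cong[OF refl]) (auto simp: i1 gl_BR1)
  also have "\<dots> = K * x 1 * y 1 * ((\<rho> + c) / \<rho>)"
    by (subst sum2_delta[OF b finite_labels]) simp
  finally show ?thesis .
qed



definition diagv :: "real \<Rightarrow> real \<Rightarrow> lb \<Rightarrow> real" where
  "diagv \<rho> c l = (case l of BR a \<Rightarrow> if a = 1 then 0 else \<rho> / (\<rho> + c)
     | BI a \<Rightarrow> if a = 1 then (2 * \<rho>^2 + 4 * c * \<rho> + c^2) / ((\<rho> + c) * (\<rho> + 2 * c)) else \<rho> / (\<rho> + c)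
     | Zz \<Rightarrow> - (c^2) / ((\<rho> + c) * (\<rho> + 2 * c))
     | _ \<Rightarrow> 0)"

definition offv :: "real \<Rightarrow> real \<Rightarrow> lb \<Rightarrow> lb \<Rightarrow> real" where
  "offv \<rho> c l m =
     (if (l, m) = (Ee 0, Ee 1) \<or> (l, m) = (Ff 0, Ff 1) then - \<rho> / (\<rho> + 2 * c)
      else if (l, m) = (Ee 1, Ee 0) \<or> (l, m) = (Ff 1, Ff 0) then -1
      else if (l, m) = (BI 1, Zz) then - c / (2 * (\<rho> + c) * (\<rho> + 2 * c))
      else if (l, m) = (Zz, BI 1) then 2 * c * (\<rho> + c) / (\<rho> + 2 * c)
      else 0)"

definition Sl :: "nat \<Rightarrow> real \<Rightarrow> real \<Rightarrow> lb \<Rightarrow> lb \<Rightarrow> real" where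
  "Sl n \<rho> c l m = (2 * real n - 2) * ((if l = m then diagv \<rho> c l else 0) + offv \<rho> c l m)"

lemma label_cases3:
  assumes "2 \<le> n" "l \<in> labels n"
  shows "l = BR 1 \<or> l = BI 1 \<or> l = Ee 0 \<or> l = Ff 0 \<or> l = Ee 1 \<or> l = Ff 1 \<or> l = Zz \<or>
    (\<exists>a. Suc (Suc a) < n \<and> (l = BR (Suc (Suc a)) \<or> l = BI (Suc (Suc a)) \<or> l = Ee (Suc (Suc a)) \<or> l = Ff (Suc (Suc a))))"
proof -
  have *: "2 \<le> a \<Longrightarrow> \<exists>b. a = Suc (Suc b)" for a :: nat by presburger
  show ?thesis using label_cases2[OF assms] * by metis
qed

lemma par_neq[simp]: "(2 * (a::nat) = Suc (2 * b)) = False" "(Suc (2 * a) = 2 * b) = False"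
  by presburger+

lemma S_idx:
  assumes "2 \<le> n" "l \<in> labels n" "m \<in> labels n"
  shows "adHs_claim n \<rho> c (idx n l) (idx n m) = Sl n \<rho> c l m"
proof -
  obtain N where N: "n = Suc (Suc N)" using assms(1) by (metis add_2_eq_Suc le_Suc_ex)
  show ?thesis
  using label_cases3[OF assms(1,2)] label_cases3[OF assms(1,3)]
  apply (elim disjE exE conjE)
  apply (simp_all add: adHs_claim_def blockdiag_def S4_def Emat_def Sl_def diagv_def offv_def N)
  done
qed



lemma gl_simps:
  "gl \<rho> c (BR a) m = (if m = BR a then (if a = 1 then (\<rho> + c) / \<rho> else (\<rho> + c) / (4 * \<rho>)) else 0)"
  "gl \<rho> c (BI a) m = (if m = BI a then (if a = 1 then (\<rho> + c) ^ 3 / (\<rho>^2 * (\<rho> + 2 * c)) else (\<rho> + c) / (4 * \<rho>))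
      else if a = 1 \<and> m = Zz then - (c * (\<rho> + c)) / (2 * \<rho>^2 * (\<rho> + 2 * c)) else 0)"
  "gl \<rho> c (Ee k) m = (if m = Ee k then (if k = 0 then (\<rho> + 2 * c) / (4 * \<rho>^2) else 1 / (4 * \<rho>)) else 0)"
  "gl \<rho> c (Ff k) m = (if m = Ff k then (if k = 0 then (\<rho> + 2 * c) / (4 * \<rho>^2) else 1 / (4 * \<rho>)) else 0)"
  "gl \<rho> c Zz m = (if m = Zz then (\<rho> + c) / (4 * \<rho>^2 * (\<rho> + 2 * c))
      else if m = BI 1 then - (c * (\<rho> + c)) / (2 * \<rho>^2 * (\<rho> + 2 * c)) else 0)"
  by (auto simp: gl_def)

lemma mult_if0: "x * (if P then y else 0) = (if P then x * y else (0::real))"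
  "(if P then y else 0) * x = (if P then y * x else (0::real))" by simp_all

lemma adj_key:
  assumes n: "2 \<le> n" and q: "q \<in> labels n" and m: "m \<in> labels n" and rho: "\<rho> > 0" and c: "c \<ge> 0"
  shows "(2 * real n - 2) * (\<rho> / (\<rho> + c)) * (\<Sum>l\<in>labels n. C (BR 1) q l * gl \<rho> c l m)
       + (2 * real n - 2) * (\<rho> / (\<rho> + c)) * (\<Sum>l\<in>labels n. C (BR 1) m l * gl \<rho> c q l)
       = 2 * (\<Sum>l\<in>labels n. Sl n \<rho> c l m * gl \<rho> c q l)"
proof -
  have nz: "\<rho> + c \<noteq> 0" "\<rho> + 2 * c \<noteq> 0" "\<rho> \<noteq> 0" using rho c by auto
  have n': "0 < n" "Suc 0 < n" using n by auto
  have pos: "\<rho> + c > 0" "\<rho> + 2 * c > 0" using rho c by auto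
  show ?thesis
    unfolding C_def sum_evl sum_labels2[OF n]
    using label_cases2[OF n q] label_cases2[OF n m]
    apply (elim disjE exE conjE)
    apply (simp_all add: Csimps gl_simps Sl_def diagv_def offv_def n' nz mult_if0)
    using rho c apply (simp_all add: divide_simps pos)
    apply (simp_all add: algebra_simps power2_eq_square power3_eq_cube)
    done
qed


lemma assumes "\<rho> > 0" "c \<ge> (0::real)" shows " 4 * (\<rho> * ((\<rho> + c) ^ 3 * (2 * real n - 2))) /
        ((\<rho> + c) * (\<rho>\<^sup>2 * (\<rho> + 2 * c))) =
        2 * ((2 * real n - 2) * (2 * \<rho>\<^sup>2 + 4 * c * \<rho> + c\<^sup>2) * (\<rho> + c) ^ 3) /
        ((\<rho> + c) * (\<rho> + 2 * c) * (\<rho>\<^sup>2 * (\<rho> + 2 * c))) -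
        2 * ((2 * real n - 2) * (c * ((\<rho> + c) * (c * (\<rho> + c))))) /
        ((\<rho> + 2 * c) * (\<rho>\<^sup>2 * (\<rho> + 2 * c)))"
proof -
  have "\<rho> + c > 0" "\<rho> + 2*c > 0" using assms by auto
  thus ?thesis using assms by (simp add: divide_simps) (simp add: algebra_simps power2_eq_square power3_eq_cube)
qed


lemma gip_single:
  assumes "l0 \<in> labels n" "m0 \<in> labels n"
  shows "gip n \<rho> c (uvec (idx n l0)) (uvec (idx n m0)) = gl \<rho> c l0 m0"
proof -
  have "gip n \<rho> c (uvec (idx n l0)) (uvec (idx n m0))
     = (\<Sum>l\<in>labels n. uvec (idx n l0) (idx n l) * (\<Sum>m\<in>labels n. uvec (idx n m0) (idx n m) * gl \<rho> c l m))"
    unfolding gip_def by (simp add: sum_distrib_left mult_ac)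
  also have "\<dots> = (\<Sum>l\<in>labels n. uvec (idx n l0) (idx n l) * gl \<rho> c l m0)"
    using sum_single[OF assms(2)] by simp
  also have "\<dots> = gl \<rho> c l0 m0" using sum_single[OF assms(1)] by simp
  finally show ?thesis .
qed

lemma gip_sc: "gip n \<rho> c (sc t x) (sc s y) = t * s * gip n \<rho> c x y"
  unfolding gip_def sc_def by (simp add: sum_distrib_left mult_ac)

lemma admat_sc: "admat n (sc s x) = (\<lambda>i j. s * admat n x i j)"
  unfolding admat_def brk_def sc_def by (simp add: sum_distrib_left mult_ac)

lemma mtr_sc: "mtr n (\<lambda>i j. s * M i j) = s * mtr n M"
  unfolding mtr_def by (simp add: sum_distrib_left)

lemma admat_zvec: "admat n zvec = (\<lambda>i j. 0)"
  unfolding admat_def brk_def zvec_def by simp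

lemma gip_zvec: "gip n \<rho> c zvec y = 0"
  unfolding gip_def zvec_def by simp

lemma mtr_zero: "mtr n (\<lambda>i j. 0) = 0" unfolding mtr_def by simp

lemma g11: "2 \<le> n \<Longrightarrow> gip n \<rho> c (uvec (idx n (BR 1))) (uvec (idx n (BR 1))) = (\<rho> + c) / \<rho>"
  by (subst gip_single) (auto simp: gl_def)

lemma meancurv_ge2:
  assumes n: "2 \<le> n" and pos: "gip n \<rho> c (uvec (idx n (BR 1))) (uvec (idx n (BR 1))) \<noteq> 0"
  shows "is_meancurv n \<rho> c H \<longleftrightarrow>
     H = sc (mtr n (admat n (uvec (idx n (BR 1)))) / gip n \<rho> c (uvec (idx n (BR 1))) (uvec (idx n (BR 1))))
            (uvec (idx n (BR 1)))"
proof -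
  define u where "u = uvec (idx n (BR 1))"
  define T where "T = mtr n (admat n u)"
  define G where "G = gip n \<rho> c u u"
  have G: "G \<noteq> 0" using pos by (simp add: G_def u_def)
  have as: "aset n = {sc t u | t. True}" using n by (simp add: aset_def u_def)
  have key: "\<And>t s. gip n \<rho> c (sc t u) (sc s u) = t * s * G" by (simp add: gip_sc G_def)
  have key2: "\<And>s. mtr n (admat n (sc s u)) = s * T" by (simp add: admat_sc mtr_sc T_def)
  have "is_meancurv n \<rho> c H \<longleftrightarrow> H = sc (T / G) u"
  proof
    assume H: "is_meancurv n \<rho> c H"
    then obtain t where t: "H = sc t u" unfolding is_meancurv_def as by blast
    have "sc 1 u \<in> aset n" unfolding as by blast
    with H have "gip n \<rho> c H (sc 1 u) = mtr n (admat n (sc 1 u))" unfolding is_meancurv_def by blast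
    hence "t * G = T" using key key2 t by simp
    hence "t = T / G" using G by (simp add: field_simps)
    thus "H = sc (T / G) u" using t by simp
  next
    assume H: "H = sc (T / G) u"
    show "is_meancurv n \<rho> c H"
      unfolding is_meancurv_def
    proof
      show "H \<in> aset n" unfolding as H by blast
      show "\<forall>A\<in>aset n. gip n \<rho> c H A = mtr n (admat n A)"
      proof
        fix A assume "A \<in> aset n"
        then obtain s where s: "A = sc s u" unfolding as by blast
        show "gip n \<rho> c H A = mtr n (admat n A)" unfolding H s key key2 using G by (simp add: field_simps)
      qed
    qed
  qed
  thus ?thesis by (simp add: T_def G_def u_def)
qed

lemma meancurv_1: "is_meancurv 1 \<rho> c H \<longleftrightarrow> H = zvec"
  by (auto simp: is_meancurv_def aset_def gip_zvec admat_zvec mtr_zero)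

lemma sum3_swap:
  "(\<Sum>l\<in>A. \<Sum>m\<in>A. \<Sum>q\<in>A. F l m q) = (\<Sum>q\<in>A. \<Sum>m\<in>A. \<Sum>l\<in>A. (F l m q :: real))"
proof -
  have "(\<Sum>l\<in>A. \<Sum>m\<in>A. \<Sum>q\<in>A. F l m q) = (\<Sum>l\<in>A. \<Sum>q\<in>A. \<Sum>m\<in>A. F l m q)"
    by (rule sum.cong[OF refl], rule sum.swap)
  also have "\<dots> = (\<Sum>q\<in>A. \<Sum>l\<in>A. \<Sum>m\<in>A. F l m q)" by (rule sum.swap)
  also have "\<dots> = (\<Sum>q\<in>A. \<Sum>m\<in>A. \<Sum>l\<in>A. F l m q)" by (rule sum.cong[OF refl], rule sum.swap)
  finally show ?thesis .
qed

lemma matvec_idx: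
  assumes "1 \<le> n"
  shows "matvec n M x (idx n l) = (\<Sum>q\<in>labels n. M (idx n l) (idx n q) * x (idx n q))"
  unfolding matvec_def sum_idx[OF assms] ..

lemma gip_mv_left:
  assumes "1 \<le> n"
  shows "gip n \<rho> c (matvec n M x) y = (\<Sum>q\<in>labels n. \<Sum>m\<in>labels n.
       x (idx n q) * y (idx n m) * (\<Sum>l\<in>labels n. M (idx n l) (idx n q) * gl \<rho> c l m))"
proof -
  have "gip n \<rho> c (matvec n M x) y = (\<Sum>l\<in>labels n. \<Sum>m\<in>labels n. \<Sum>q\<in>labels n.
      x (idx n q) * y (idx n m) * (M (idx n l) (idx n q) * gl \<rho> c l m))"
    unfolding gip_def matvec_idx[OF assms] by (simp add: sum_distrib_right sum_distrib_left mult_ac)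
  also have "\<dots> = (\<Sum>q\<in>labels n. \<Sum>m\<in>labels n. \<Sum>l\<in>labels n.
      x (idx n q) * y (idx n m) * (M (idx n l) (idx n q) * gl \<rho> c l m))"
    by (rule sum3_swap)
  finally show ?thesis by (simp add: sum_distrib_left)
qed

lemma gip_mv_right:
  assumes "1 \<le> n"
  shows "gip n \<rho> c x (matvec n M y) = (\<Sum>q\<in>labels n. \<Sum>m\<in>labels n.
       x (idx n q) * y (idx n m) * (\<Sum>l\<in>labels n. M (idx n l) (idx n m) * gl \<rho> c q l))"
proof -
  have "gip n \<rho> c x (matvec n M y) = (\<Sum>q\<in>labels n. \<Sum>l\<in>labels n. \<Sum>m\<in>labels n.
      x (idx n q) * y (idx n m) * (M (idx n l) (idx n m) * gl \<rho> c q l))"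
    unfolding gip_def matvec_idx[OF assms] by (simp add: sum_distrib_right sum_distrib_left mult_ac)
  also have "\<dots> = (\<Sum>q\<in>labels n. \<Sum>m\<in>labels n. \<Sum>l\<in>labels n.
      x (idx n q) * y (idx n m) * (M (idx n l) (idx n m) * gl \<rho> c q l))"
    by (rule sum.cong[OF refl], rule sum.swap)
  finally show ?thesis by (simp add: sum_distrib_left)
qed

lemma admat_H:
  assumes "2 \<le> n" "l \<in> labels n" "q \<in> labels n"
  shows "admat n (sc h (uvec (idx n (BR 1)))) (idx n l) (idx n q) = h * C (BR 1) q l"
proof -
  have b: "BR 1 \<in> labels n" using assms by simp
  show ?thesis unfolding admat_sc admat_idx[OF assms(2,3)]
    using sum_single[OF b, of "\<lambda>l'. C l' q l"] by simp
qed

lemma admat_H2: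
  assumes "2 \<le> n" "l \<in> labels n" "q \<in> labels n"
  shows "admat n (sc h (uvec (Suc 0))) (idx n l) (idx n q) = h * C (BR (Suc 0)) q l"
  using admat_H[OF assms] by simp

lemma adjoint:
  assumes n: "2 \<le> n" and rho: "\<rho> > 0" and c: "c \<ge> 0"
    and h: "h = (2 * real n - 2) * (\<rho> / (\<rho> + c))"
  defines "H \<equiv> sc h (uvec (idx n (BR 1)))"
  defines "Ast \<equiv> (\<lambda>i j. 2 * adHs_claim n \<rho> c i j - admat n H i j)"
  shows "\<forall>x y. gip n \<rho> c (matvec n (admat n H) x) y = gip n \<rho> c x (matvec n Ast y)"
proof (intro allI)
  fix x y
  have n1: "1 \<le> n" using n by simp
  have coef: "(\<Sum>l\<in>labels n. admat n H (idx n l) (idx n q) * gl \<rho> c l m)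
       = (\<Sum>l\<in>labels n. Ast (idx n l) (idx n m) * gl \<rho> c q l)"
    if q: "q \<in> labels n" and m: "m \<in> labels n" for q m
  proof -
    have "(\<Sum>l\<in>labels n. admat n H (idx n l) (idx n q) * gl \<rho> c l m)
        = h * (\<Sum>l\<in>labels n. C (BR 1) q l * gl \<rho> c l m)"
      unfolding H_def sum_distrib_left by (rule sum.cong[OF refl]) (simp add: admat_H2[OF n _ q])
    moreover have "(\<Sum>l\<in>labels n. Ast (idx n l) (idx n m) * gl \<rho> c q l)
        = 2 * (\<Sum>l\<in>labels n. Sl n \<rho> c l m * gl \<rho> c q l) - h * (\<Sum>l\<in>labels n. C (BR 1) m l * gl \<rho> c q l)"
      unfolding Ast_def H_def sum_distrib_left sum_subtractf[symmetric]
      by (rule sum.cong[OF refl]) (simp add: admat_H2[OF n _ m] S_idx[OF n _ m] algebra_simps)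
    ultimately show ?thesis using adj_key[OF n q m rho c] unfolding h by simp
  qed
  show "gip n \<rho> c (matvec n (admat n H) x) y = gip n \<rho> c x (matvec n Ast y)"
    unfolding gip_mv_left[OF n1] gip_mv_right[OF n1]
    by (rule sum.cong[OF refl], rule sum.cong[OF refl]) (simp add: coef)
qed



theorem lemma4p7:
  fixes n :: nat and \<rho> c :: real
  assumes "1 \<le> n" and "\<rho> > 0" and "c \<ge> 0"
  shows
    "(1 < n \<longrightarrow>
       mtr n (admat n (uvec (idx n (BR 1)))) / gip n \<rho> c (uvec (idx n (BR 1))) (uvec (idx n (BR 1)))
         = (2 * real n - 2) * (\<rho> / (\<rho> + c))
     \<and> (\<forall>H. is_meancurv n \<rho> c H \<longleftrightarrow>
             H = sc (mtr n (admat n (uvec (idx n (BR 1)))) / gip n \<rho> c (uvec (idx n (BR 1))) (uvec (idx n (BR 1))))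
                    (uvec (idx n (BR 1))))
     \<and> (\<forall>H. is_meancurv n \<rho> c H \<longrightarrow>
          (\<exists>Ast :: nat \<Rightarrow> nat \<Rightarrow> real.
             (\<forall>x y. gip n \<rho> c (matvec n (admat n H) x) y = gip n \<rho> c x (matvec n Ast y))
           \<and> (\<forall>i\<in>{1..dimL n}. \<forall>j\<in>{1..dimL n}.
                 adHs_claim n \<rho> c i j = (admat n H i j + Ast i j) / 2)))
     \<and> (\<forall>x y. gip n \<rho> c (matvec n (\<lambda>i j. (2 * real n + 4) * (\<rho> / (\<rho> + c)) * Emat 1 1 i j) x) y
               = mtr n (mmul n (admat n x) (admat n y))))
   \<and> (n = 1 \<longrightarrow>
       (\<forall>x y. gip n \<rho> c (matvec n (\<lambda>i j. 0) x) y = mtr n (mmul n (admat n x) (admat n y)))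
     \<and> (\<forall>H. is_meancurv n \<rho> c H \<longleftrightarrow> H = zvec))"
proof (intro conjI impI)
  assume "1 < n"
  hence n: "2 \<le> n" by simp
  have rho: "\<rho> > 0" and c: "c \<ge> 0" using assms by auto
  have pc: "\<rho> + c > 0" using rho c by simp
  let ?u = "uvec (idx n (BR 1))"
  have G: "gip n \<rho> c ?u ?u = (\<rho> + c) / \<rho>" by (rule g11[OF n])
  have T: "mtr n (admat n ?u) = 2 * real n - 2" by (rule trace_BR1[OF n])
  show ratio: "mtr n (admat n ?u) / gip n \<rho> c ?u ?u = (2 * real n - 2) * (\<rho> / (\<rho> + c))"
    unfolding G T using rho pc by (simp add: field_simps)
  have Gnz: "gip n \<rho> c ?u ?u \<noteq> 0" unfolding G using rho pc by simp
  show MC: "\<forall>H. is_meancurv n \<rho> c H \<longleftrightarrow> H = sc (mtr n (admat n ?u) / gip n \<rho> c ?u ?u) ?u"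
    using meancurv_ge2[OF n Gnz] by blast
  show "\<forall>H. is_meancurv n \<rho> c H \<longrightarrow>
          (\<exists>Ast :: nat \<Rightarrow> nat \<Rightarrow> real.
             (\<forall>x y. gip n \<rho> c (matvec n (admat n H) x) y = gip n \<rho> c x (matvec n Ast y))
           \<and> (\<forall>i\<in>{1..dimL n}. \<forall>j\<in>{1..dimL n}.
                 adHs_claim n \<rho> c i j = (admat n H i j + Ast i j) / 2))"
  proof (intro allI impI)
    fix H assume "is_meancurv n \<rho> c H"
    hence H: "H = sc ((2 * real n - 2) * (\<rho> / (\<rho> + c))) ?u" using MC ratio by simp
    let ?Ast = "\<lambda>i j. 2 * adHs_claim n \<rho> c i j - admat n H i j"
    show "\<exists>Ast :: nat \<Rightarrow> nat \<Rightarrow> real.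
             (\<forall>x y. gip n \<rho> c (matvec n (admat n H) x) y = gip n \<rho> c x (matvec n Ast y))
           \<and> (\<forall>i\<in>{1..dimL n}. \<forall>j\<in>{1..dimL n}.
                 adHs_claim n \<rho> c i j = (admat n H i j + Ast i j) / 2)"
    proof (intro exI conjI)
      show "\<forall>x y. gip n \<rho> c (matvec n (admat n H) x) y = gip n \<rho> c x (matvec n ?Ast y)"
        unfolding H by (rule adjoint[OF n rho c refl])
      show "\<forall>i\<in>{1..dimL n}. \<forall>j\<in>{1..dimL n}. adHs_claim n \<rho> c i j = (admat n H i j + ?Ast i j) / 2"
        by simp
    qed
  qed
  show "\<forall>x y. gip n \<rho> c (matvec n (\<lambda>i j. (2 * real n + 4) * (\<rho> / (\<rho> + c)) * Emat 1 1 i j) x) y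
               = mtr n (mmul n (admat n x) (admat n y))"
  proof (intro allI)
    fix x y
    have i1: "idx n (BR 1) = 1" by simp
    show "gip n \<rho> c (matvec n (\<lambda>i j. (2 * real n + 4) * (\<rho> / (\<rho> + c)) * Emat 1 1 i j) x) y
               = mtr n (mmul n (admat n x) (admat n y))"
      unfolding killing_rhs[OF n] killing_ge2[OF n] i1 using rho pc by (simp add: divide_simps)
  qed
next
  assume n: "n = 1"
  show "\<forall>x y. gip n \<rho> c (matvec n (\<lambda>i j. 0) x) y = mtr n (mmul n (admat n x) (admat n y))"
  proof (intro allI)
    fix x y
    have "matvec n (\<lambda>i j. 0) x = zvec" by (simp add: matvec_def zvec_def)
    thus "gip n \<rho> c (matvec n (\<lambda>i j. 0) x) y = mtr n (mmul n (admat n x) (admat n y))"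
      using killing_1 n by (simp add: gip_zvec)
  qed
  show "\<forall>H. is_meancurv n \<rho> c H \<longleftrightarrow> H = zvec" using meancurv_1 n by simp
qed

end
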